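(* Let $n\ge2$, $\mathbb{Z}_n=\mathbb{Z}/n\mathbb{Z}$, $\mathcal{P}=\{(x_1,\dots,x_{n-1})\in\mathbb{Z}_n^{n-1}\mid x_1,\dots,x_{n-1}\text{ pairwise different}\}$ and $\mathcal{S}=\{r\in\mathbb{Z}_n^{n-1}\mid\exists\,x,y\in\mathcal{P}: r=x+y\}$. If $r=(r_1,\dots,r_{n-1})\in\mathbb{Z}_n^{n-1}$ satisfies $|\{r_1,\dots,r_{n-1}\}|\le2$, then $r\in\mathcal{S}$. *)

theory Defs
  imports Main
begin

text \<open>Elements of Z_n are represented by their canonical representatives in {0..<n} (type int);
  vectors in Z_n^(n-1) are lists of length n-1 with entries in {0..<n}.\<close>

definition Zn_vecs :: "int \<Rightarrow> int list set" where
  "Zn_vecs n = {x. length x = nat n - 1 \<and> set x \<subseteq> {0..<n}}"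

definition Zn_add :: "int \<Rightarrow> int list \<Rightarrow> int list \<Rightarrow> int list" where
  "Zn_add n x y = map2 (\<lambda>a b. (a + b) mod n) x y"

definition perm_set :: "int \<Rightarrow> int list set" where
  "perm_set n = {x \<in> Zn_vecs n. distinct x}"

definition sum_set :: "int \<Rightarrow> int list set" where
  "sum_set n = {r \<in> Zn_vecs n. \<exists>x \<in> perm_set n. \<exists>y \<in> perm_set n. r = Zn_add n x y}"

end

theory Submission
  imports Defs
begin

lemma closed_sets:
  fixes n d :: int
  assumes n: "n \<ge> 1"
  shows "k < nat n \<Longrightarrow> \<exists>z X. z \<in> {0..<n} \<and> X \<subseteq> {0..<n} \<and> z \<notin> X \<and> card X = k
           \<and> (\<forall>u\<in>X. (u + d) mod n \<in> insert z X)"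
proof (induction k)
  case 0
  then show ?case using n by (intro exI[of _ 0] exI[of _ "{}"]) auto
next
  case (Suc k)
  then obtain z X where zX: "z \<in> {0..<n}" "X \<subseteq> {0..<n}" "z \<notin> X" "card X = k"
      "\<forall>u\<in>X. (u + d) mod n \<in> insert z X" by auto
  have fin: "finite X" using zX(2) finite_subset by blast
  define X' where "X' = insert z X"
  have cX': "card X' = Suc k" using fin zX unfolding X'_def by simp
  have sub: "X' \<subseteq> {0..<n}" using zX unfolding X'_def by auto
  have "\<exists>z'. z' \<in> {0..<n} \<and> z' \<notin> X' \<and> (z + d) mod n \<in> insert z' X'"
  proof (cases "(z + d) mod n \<in> X'")
    case False
    then show ?thesis using n by (intro exI[of _ "(z + d) mod n"]) auto
  next
    case True
    have "\<not> {0..<n} \<subseteq> X'"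
    proof
      assume "{0..<n} \<subseteq> X'"
      then have "card {0..<n} \<le> card X'" using fin unfolding X'_def by (intro card_mono) auto
      then show False using cX' Suc.prems by simp
    qed
    then obtain z' where "z' \<in> {0..<n}" "z' \<notin> X'" by blast
    then show ?thesis using True by blast
  qed
  then obtain z' where z': "z' \<in> {0..<n}" "z' \<notin> X'" "(z + d) mod n \<in> insert z' X'" by blast
  show ?case
    apply (rule exI[of _ z'], rule exI[of _ X'])
    using z' sub cX' zX(5) unfolding X'_def by auto
qed

lemma mod_sub_inj:
  fixes n c u v :: int
  assumes "u \<in> {0..<n}" "v \<in> {0..<n}" "(c - u) mod n = (c - v) mod n"
  shows "u = v"
proof -
  have "n dvd (c - v) - (c - u)" using assms(3) by (metis mod_eq_dvd_iff)
  then have "n dvd u - v" by (simp add: algebra_simps)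
  then obtain t where t: "u - v = n * t" by (auto elim: dvdE)
  have "\<bar>u - v\<bar> < n" using assms by auto
  then have "t = 0" using t assms
    by (smt (verit, best) mult_less_cancel_left2 mult_minus_right zero_less_mult_iff)
  then show ?thesis using t by simp
qed

lemma mod_cross:
  fixes n a b u v :: int
  assumes "n > 0" "v \<in> {0..<n}" "(a - u) mod n = (b - v) mod n"
  shows "v = (u + (b - a) mod n) mod n"
proof -
  have "(v) mod n = (u + (b - a)) mod n"
  proof -
    have "n dvd (b - v) - (a - u)" using assms(3) by (metis mod_eq_dvd_iff)
    then have "n dvd (u + (b - a)) - v" by (simp add: algebra_simps)
    then show ?thesis by (simp add: mod_eq_dvd_iff dvd_diff_commute)
  qed
  then have "v = (u + (b - a)) mod n" using assms by simp
  then show ?thesis by (simp add: mod_add_right_eq)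
qed

theorem proposition5p2:
  fixes n :: int and r :: "int list"
  assumes "n \<ge> 2"
    and "r \<in> Zn_vecs n"
    and "card (set r) \<le> 2"
  shows "r \<in> sum_set n"
proof -
  define m where "m = nat n - 1"
  have lr: "length r = m" and sr: "set r \<subseteq> {0..<n}" using assms(2) unfolding Zn_vecs_def m_def by auto
  have m1: "m \<ge> 1" using assms(1) unfolding m_def by linarith
  define a where "a = r ! 0"
  have aset: "a \<in> set r" using lr m1 unfolding a_def by auto
  have "\<exists>b. \<forall>v\<in>set r. v = a \<or> v = b"
  proof (cases "set r \<subseteq> {a}")
    case True then show ?thesis by auto
  next
    case False
    then obtain b where b: "b \<in> set r" "b \<noteq> a" by auto
    have "{a, b} \<subseteq> set r" using b aset by auto
    moreover have "card {a,b} = 2" using b by simp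
    ultimately have "{a,b} = set r" using assms(3)
      by (metis List.finite_set card_seteq)
    then show ?thesis by auto
  qed
  then obtain b where ab: "\<forall>v\<in>set r. v = a \<or> v = b" by blast
  define d where "d = (b - a) mod n"
  define P0 where "P0 = {i. i < m \<and> r ! i = a}"
  define P1 where "P1 = {i. i < m \<and> r ! i \<noteq> a}"
  have fP0: "finite P0" and fP1: "finite P1" unfolding P0_def P1_def by auto
  have "P0 \<union> P1 = {..<m}" "P0 \<inter> P1 = {}" unfolding P0_def P1_def by auto
  then have cP: "card P0 + card P1 = m" using fP0 fP1 by (metis card_Un_disjoint card_lessThan)
  have "card P0 < nat n" using cP m1 unfolding m_def by linarith
  then obtain z X where zX: "z \<in> {0..<n}" "X \<subseteq> {0..<n}" "z \<notin> X" "card X = card P0"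
      "\<forall>u\<in>X. (u + d) mod n \<in> insert z X"
    using closed_sets[of n "card P0" d] assms(1) by auto
  define X2 where "X2 = {0..<n} - insert z X"
  have finX: "finite X" using zX(2) finite_subset by blast
  have "card X2 = card {0..<n} - card (insert z X)"
    unfolding X2_def using zX finX by (intro card_Diff_subset) auto
  then have cX2: "card X2 = card P1" using zX finX cP unfolding m_def by simp
  obtain f0 where f0: "bij_betw f0 P0 X"
    using finite_same_card_bij[OF fP0 finX] zX(4) by metis
  obtain f1 where f1: "bij_betw f1 P1 X2"
    using finite_same_card_bij[OF fP1] cX2 unfolding X2_def by (metis finite_Diff finite_atLeastLessThan_int)
  define F where "F i = (if r ! i = a then f0 i else f1 i)" for i
  have FX: "i < m \<Longrightarrow> r ! i = a \<Longrightarrow> F i \<in> X" for i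
    using f0 unfolding F_def P0_def bij_betw_def by auto
  have FX2: "i < m \<Longrightarrow> r ! i \<noteq> a \<Longrightarrow> F i \<in> X2" for i
    using f1 unfolding F_def P1_def bij_betw_def by auto
  have Frange: "i < m \<Longrightarrow> F i \<in> {0..<n}" for i
    using FX FX2 zX(2) unfolding X2_def by blast
  have rb: "i < m \<Longrightarrow> r ! i \<noteq> a \<Longrightarrow> r ! i = b" for i
    using ab lr by (metis nth_mem)
  define x where "x = map F [0..<m]"
  define y where "y = map (\<lambda>i. (r ! i - F i) mod n) [0..<m]"
  have injF: "inj_on F {0..<m}"
  proof (rule inj_onI)
    fix i j assume ij: "i \<in> {0..<m}" "j \<in> {0..<m}" "F i = F j"
    show "i = j"
    proof (cases "r ! i = a"; cases "r ! j = a")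
      assume "r ! i = a" "r ! j = a"
      then show ?thesis using ij f0 unfolding F_def P0_def bij_betw_def inj_on_def by auto
    next
      assume "r ! i \<noteq> a" "r ! j \<noteq> a"
      then show ?thesis using ij f1 unfolding F_def P1_def bij_betw_def inj_on_def by auto
    next
      assume "r ! i = a" "r ! j \<noteq> a"
      then show ?thesis using ij FX FX2 unfolding X2_def by force
    next
      assume "r ! i \<noteq> a" "r ! j = a"
      then show ?thesis using ij FX FX2 unfolding X2_def by force
    qed
  qed
  have n0: "n > 0" using assms(1) by simp
  have injG: "inj_on (\<lambda>i. (r ! i - F i) mod n) {0..<m}"
  proof (rule inj_onI)
    fix i j assume ij: "i \<in> {0..<m}" "j \<in> {0..<m}" "(r ! i - F i) mod n = (r ! j - F j) mod n"
    have cross: "False" if "i' < m" "j' < m" "r ! i' = a" "r ! j' \<noteq> a"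
       "(r ! i' - F i') mod n = (r ! j' - F j') mod n" for i' j'
    proof -
      have "F j' = (F i' + d) mod n"
        using mod_cross[OF n0 Frange[OF that(2)]] that rb unfolding d_def by auto
      then have "F j' \<in> insert z X" using zX(5) FX that by auto
      then show False using FX2 that unfolding X2_def by auto
    qed
    show "i = j"
    proof (cases "r ! i = a"; cases "r ! j = a")
      assume h: "r ! i = a" "r ! j = a"
      then have "F i = F j" using mod_sub_inj[OF Frange Frange] ij by auto
      then show ?thesis using injF ij by (auto dest: inj_onD)
    next
      assume h: "r ! i \<noteq> a" "r ! j \<noteq> a"
      then have "r ! i = r ! j" using rb ij by auto
      then have "F i = F j" using mod_sub_inj[OF Frange Frange] ij by auto
      then show ?thesis using injF ij by (auto dest: inj_onD)
    next
      assume "r ! i = a" "r ! j \<noteq> a"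
      then show ?thesis using cross[of i j] ij by auto
    next
      assume "r ! i \<noteq> a" "r ! j = a"
      then show ?thesis using cross[of j i] ij by auto
    qed
  qed
  have xP: "x \<in> perm_set n"
    unfolding perm_set_def Zn_vecs_def x_def m_def[symmetric]
    using Frange injF by (auto simp: distinct_map)
  have yP: "y \<in> perm_set n"
    unfolding perm_set_def Zn_vecs_def y_def m_def[symmetric]
    using injG n0 by (auto simp: distinct_map)
  have "r = Zn_add n x y"
  proof (rule nth_equalityI)
    show "length r = length (Zn_add n x y)" using lr unfolding Zn_add_def x_def y_def by simp
  next
    fix i assume "i < length r"
    then have i: "i < m" using lr by simp
    have "r ! i \<in> {0..<n}" using sr i lr by (metis nth_mem subsetD)
    then have "r ! i = (F i + (r ! i - F i) mod n) mod n"
      by (simp add: mod_add_right_eq)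
    then show "r ! i = Zn_add n x y ! i" using i unfolding Zn_add_def x_def y_def by simp
  qed
  then show ?thesis using assms(2) xP yP unfolding sum_set_def by blast
qed

end
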